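(* Let $L\subseteq\Sigma^*$ be a regular language. Then the following are equivalent: (1) $V_L(n)\in O(\log n)$; (2) $|\Sigma^{\le n}/{\approx_L}|$ is polynomially bounded in $n$; (3) the Myhill–Nerode right congruence $\sim_L$ has no critical tuple.
   Context: $\sim_L$ is the Myhill–Nerode right congruence: $x\sim_L y$ iff $\{z: xz\in L\}=\{z:yz\in L\}$. For an equivalence $\sim$ on $\Sigma^*$, its suffix expansion $\approx$ is defined by $a_1\cdots a_n\approx b_1\cdots b_m$ iff $n=m$ and $a_i\cdots a_n\sim b_i\cdots b_n$ for all $1\le i\le n$; $\approx_L$ is the suffix expansion of $\sim_L$, and $\Sigma^{\le n}/{\approx_L}$ is the set of $\approx_L$-classes of words of length at most $n$. A critical tuple in a right congruence $\sim$ is a tuple $(u_2,v_2,u,v)$ of words with $|u_2|=|v_2|\ge1$, $u=u_1u_2$ and $v=v_1v_2$ for some words $u_1,v_1$, and $u_2w\not\sim v_2w$ for all $w\in\{u,v\}^*$. $V_L(n)$ is the variable-size sliding window space complexity of $L$: with $\overline\Sigma=\Sigma\cup\{\downarrow\}$, the active window is $\mathrm{wnd}(\varepsilon)=\varepsilon$, $\mathrm{wnd}(ua)=\mathrm{wnd}(u)a$ ($a\in\Sigma$), $\mathrm{wnd}(u\downarrow)=\varepsilon$ if $\mathrm{wnd}(u)=\varepsilon$ and $=v$ if $\mathrm{wnd}(u)=av$. A variable-size sliding window algorithm for $L$ is a deterministic (possibly infinite-state) automaton over $\overline\Sigma$ whose states are bit strings, outputting after each prefix whether the current window is in $L$; its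 space complexity at $n$ is the maximal bit-string length of states reached on inputs whose window never exceeds length $n$; $V_L(n)$ is the space complexity of a space-optimal such algorithm (which exists). *)

theory Defs
  imports Complex_Main "HOL-Library.Landau_Symbols" "HOL-Library.Extended_Nat"
begin

definition regular :: "'a list set \<Rightarrow> bool" where
  "regular L \<longleftrightarrow> (\<exists>(Q::nat set) (q0::nat) (\<delta>::nat \<Rightarrow> 'a \<Rightarrow> nat) (F::nat set).
      finite Q \<and> q0 \<in> Q \<and> (\<forall>q\<in>Q. \<forall>a. \<delta> q a \<in> Q) \<and>
      (\<forall>w. w \<in> L \<longleftrightarrow> foldl \<delta> q0 w \<in> F))"

definition MN :: "'a list set \<Rightarrow> 'a list \<Rightarrow> 'a list \<Rightarrow> bool" where
  "MN L x y \<longleftrightarrow> (\<forall>z. x @ z \<in> L \<longleftrightarrow> y @ z \<in> L)"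

text \<open>Suffix expansion: same length and all nonempty suffixes a_i...a_n (i = 1..n),
  i.e. drop (i-1), are related.\<close>
definition suffix_exp :: "('a list \<Rightarrow> 'a list \<Rightarrow> bool) \<Rightarrow> 'a list \<Rightarrow> 'a list \<Rightarrow> bool" where
  "suffix_exp R u v \<longleftrightarrow> length u = length v \<and> (\<forall>i < length u. R (drop i u) (drop i v))"

definition approx_classes :: "'a list set \<Rightarrow> nat \<Rightarrow> 'a list set set" where
  "approx_classes L n = {w. length w \<le> n} // {(u, v). suffix_exp (MN L) u v}"

definition star2 :: "'a list \<Rightarrow> 'a list \<Rightarrow> 'a list set" where
  "star2 u v = {concat ws | ws. set ws \<subseteq> {u, v}}"

definition critical_tuple :: "('a list \<Rightarrow> 'a list \<Rightarrow> bool) \<Rightarrow> 'a list \<Rightarrow> 'a list \<Rightarrow> 'a list \<Rightarrow> 'a list \<Rightarrow> bool" where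
  "critical_tuple R u2 v2 u v \<longleftrightarrow>
     length u2 = length v2 \<and> length u2 \<ge> 1 \<and>
     (\<exists>u1. u = u1 @ u2) \<and> (\<exists>v1. v = v1 @ v2) \<and>
     (\<forall>w \<in> star2 u v. \<not> R (u2 @ w) (v2 @ w))"

datatype 'a sym = Sym 'a | Pop

fun wstep :: "'a list \<Rightarrow> 'a sym \<Rightarrow> 'a list" where
  "wstep w (Sym a) = w @ [a]"
| "wstep w Pop = tl w"   \<comment> \<open>tl [] = []\<close>

definition wnd :: "'a sym list \<Rightarrow> 'a list" where
  "wnd u = foldl wstep [] u"

text \<open>A deterministic automaton over the extended alphabet whose states are bit strings:
  initial state, transition function, output function.\<close>
type_synonym 'a swa = "bool list \<times> (bool list \<Rightarrow> 'a sym \<Rightarrow> bool list) \<times> (bool list \<Rightarrow> bool)"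

definition run :: "'a swa \<Rightarrow> 'a sym list \<Rightarrow> bool list" where
  "run A u = (case A of (q0, \<delta>, out) \<Rightarrow> foldl \<delta> q0 u)"

definition swa_out :: "'a swa \<Rightarrow> bool list \<Rightarrow> bool" where
  "swa_out A q = (case A of (q0, \<delta>, out) \<Rightarrow> out q)"

definition swa_for :: "'a swa \<Rightarrow> 'a list set \<Rightarrow> bool" where
  "swa_for A L \<longleftrightarrow> (\<forall>u. swa_out A (run A u) \<longleftrightarrow> wnd u \<in> L)"

definition space :: "'a swa \<Rightarrow> nat \<Rightarrow> enat" where
  "space A n = (SUP u \<in> {u. \<forall>i \<le> length u. length (wnd (take i u)) \<le> n}. enat (length (run A u)))"

text \<open>Space complexity of a space-optimal algorithm: pointwise infimum over all correct algorithms
  (which coincides with the space of a space-optimal algorithm, when one exists).\<close>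
definition V :: "'a list set \<Rightarrow> nat \<Rightarrow> enat" where
  "V L n = (INF A \<in> {A. swa_for A L}. space A n)"

end

theory Submission
  imports Defs "HOL-Real_Asymp.Real_Asymp" "HOL-Library.FuncSet" "HOL-Library.Nat_Bijection"
begin

lemma MN_refl[simp]: "MN L x x" by (simp add: MN_def)
lemma MN_sym: "MN L x y \<Longrightarrow> MN L y x" by (simp add: MN_def)
lemma MN_trans: "MN L x y \<Longrightarrow> MN L y z \<Longrightarrow> MN L x z" by (simp add: MN_def)
lemma MN_app: "MN L x y \<Longrightarrow> MN L (x @ z) (y @ z)" by (simp add: MN_def)

definition SRel :: "'a list set \<Rightarrow> ('a list \<times> 'a list) set" where
  "SRel L = {(u, v). suffix_exp (MN L) u v}"

lemma suffix_exp_refl[simp]: "suffix_exp (MN L) u u" by (simp add: suffix_exp_def)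
lemma suffix_exp_sym: "suffix_exp (MN L) u v \<Longrightarrow> suffix_exp (MN L) v u"
  by (auto simp: suffix_exp_def intro: MN_sym)
lemma suffix_exp_trans: "suffix_exp (MN L) u v \<Longrightarrow> suffix_exp (MN L) v w \<Longrightarrow> suffix_exp (MN L) u w"
  unfolding suffix_exp_def by (metis MN_trans)

lemma SRel_Image_eq: "suffix_exp (MN L) u v \<Longrightarrow> SRel L `` {u} = SRel L `` {v}"
  by (auto simp: SRel_def intro: suffix_exp_trans suffix_exp_sym)

lemma SRel_Image_eqD: "SRel L `` {u} = SRel L `` {v} \<Longrightarrow> suffix_exp (MN L) u v"
proof -
  assume "SRel L `` {u} = SRel L `` {v}"
  moreover have "v \<in> SRel L `` {v}" by (simp add: SRel_def)
  ultimately show ?thesis by (auto simp: SRel_def)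
qed

lemma approx_classes_eq: "approx_classes L n = (\<lambda>x. SRel L `` {x}) ` {w. length w \<le> n}"
  by (auto simp: approx_classes_def quotient_def SRel_def)

definition classes_len :: "'a list set \<Rightarrow> nat \<Rightarrow> 'a list set set" where
  "classes_len L m = (\<lambda>x. SRel L `` {x}) ` {w. length w = m}"

lemma finite_len_words: "finite {w::('a::finite) list. length w = m}"
  using finite_lists_length_eq[of "UNIV::'a set" m] by simp

lemma finite_len_le_words: "finite {w::('a::finite) list. length w \<le> m}"
  using finite_lists_length_le[of "UNIV::'a set" m] by simp

lemma finite_approx: "finite (approx_classes (L::('a::finite) list set) n)"
  unfolding approx_classes_eq using finite_len_le_words by blast

lemma finite_classes_len: "finite (classes_len (L::('a::finite) list set) n)"
  unfolding classes_len_def using finite_len_words by blast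

lemma approx_classes_Un: "approx_classes L n = (\<Union>m\<in>{..n}. classes_len L m)"
  unfolding approx_classes_eq classes_len_def by auto

lemma card_approx_le_sum:
  "card (approx_classes (L::('a::finite) list set) n) \<le> (\<Sum>m\<le>n. card (classes_len L m))"
  unfolding approx_classes_Un by (rule card_UN_le) simp

lemma classes_len_sub: "m \<le> n \<Longrightarrow> classes_len L m \<subseteq> approx_classes L n"
  unfolding approx_classes_Un by auto

lemma star2_Nil[simp]: "[] \<in> star2 u v"
  unfolding star2_def by (rule CollectI, rule exI[of _ "[]"]) simp

lemma star2_u[simp]: "u \<in> star2 u v"
  unfolding star2_def by (rule CollectI, rule exI[of _ "[u]"]) simp

lemma star2_v[simp]: "v \<in> star2 u v"
  unfolding star2_def by (rule CollectI, rule exI[of _ "[v]"]) simp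

lemma star2_app: "x \<in> star2 u v \<Longrightarrow> y \<in> star2 u v \<Longrightarrow> x @ y \<in> star2 u v"
  unfolding star2_def
proof (clarify)
  fix ws ws' assume "set ws \<subseteq> {u, v}" "set ws' \<subseteq> {u, v}"
  then show "\<exists>ws''. concat ws @ concat ws' = concat ws'' \<and> set ws'' \<subseteq> {u, v}"
    by (intro exI[of _ "ws @ ws'"]) auto
qed

lemma star2_rep: "x \<in> star2 u v \<Longrightarrow> concat (replicate k x) \<in> star2 u v"
  by (induction k) (auto intro: star2_app)

lemma star2_concat: "set xs \<subseteq> star2 u v \<Longrightarrow> concat xs \<in> star2 u v"
  by (induction xs) (auto intro: star2_app)

lemma length_concat_rep: "length (concat (replicate k x)) = k * length x"
  by (induction k) auto

lemma concat_rep_suffix: "k \<ge> 1 \<Longrightarrow> \<exists>p. concat (replicate k x) = p @ x"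
proof (induction k)
  case (Suc k) then show ?case
    by (cases k) (auto)
qed simp

locale crit =
  fixes L :: "'a list set" and u2 v2 u v :: "'a list"
  assumes ct: "critical_tuple (MN L) u2 v2 u v"
begin

definition "UU = concat (replicate (length v) u)"
definition "VV = concat (replicate (length u) v)"
definition "ell = length u * length v"
definition W :: "bool list \<Rightarrow> 'a list" where
  "W bs = concat (map (\<lambda>b. if b then UU else VV) bs)"

lemma lens: "length u2 = length v2" "length u2 \<ge> 1" "\<exists>u1. u = u1 @ u2" "\<exists>v1. v = v1 @ v2"
  and notMN: "\<And>w. w \<in> star2 u v \<Longrightarrow> \<not> MN L (u2 @ w) (v2 @ w)"
  using ct unfolding critical_tuple_def by auto

lemma len_UUVV: "length UU = ell" "length VV = ell"
  unfolding UU_def VV_def ell_def length_concat_rep by auto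

lemma ell_pos: "ell \<ge> 1"
proof -
  obtain u1 v1 where "u = u1 @ u2" "v = v1 @ v2" using lens by blast
  then have "length u \<ge> 1" "length v \<ge> 1" using lens by auto
  then show ?thesis unfolding ell_def by (simp add: Suc_le_eq)
qed

lemma UU_split: "\<exists>UU1. UU = UU1 @ u2 \<and> length UU1 = ell - length u2"
proof -
  obtain u1 where u1: "u = u1 @ u2" using lens by blast
  have "length v \<ge> 1" using ell_pos unfolding ell_def by (cases "length v") auto
  then obtain p where "UU = p @ u" unfolding UU_def using concat_rep_suffix by blast
  then have "UU = (p @ u1) @ u2" using u1 by simp
  moreover have "length (p @ u1) = ell - length u2"
    using len_UUVV(1) \<open>UU = (p @ u1) @ u2\<close> by (metis add_diff_cancel_right' length_append)
  ultimately show ?thesis by blast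
qed

lemma VV_split: "\<exists>VV1. VV = VV1 @ v2 \<and> length VV1 = ell - length u2"
proof -
  obtain v1 where v1: "v = v1 @ v2" using lens by blast
  have "length u \<ge> 1" using ell_pos unfolding ell_def by (cases "length u") auto
  then obtain p where "VV = p @ v" unfolding VV_def using concat_rep_suffix by blast
  then have "VV = (p @ v1) @ v2" using v1 by simp
  moreover have "length (p @ v1) = ell - length u2"
    using len_UUVV(2) \<open>VV = (p @ v1) @ v2\<close> lens(1) by (metis add_diff_cancel_right' length_append)
  ultimately show ?thesis by blast
qed

lemma UU_star: "UU \<in> star2 u v" unfolding UU_def by (rule star2_rep) simp
lemma VV_star: "VV \<in> star2 u v" unfolding VV_def by (rule star2_rep) simp

lemma W_star: "W bs \<in> star2 u v"
  unfolding W_def by (induction bs) (auto intro: star2_app UU_star VV_star)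

lemma W_len: "length (W bs) = length bs * ell"
  unfolding W_def by (induction bs) (auto simp: len_UUVV)

lemma W_Cons: "W (b # bs) = (if b then UU else VV) @ W bs"
  unfolding W_def by simp

lemma W_inj: "length bs = length cs \<Longrightarrow> bs \<noteq> cs \<Longrightarrow> \<not> suffix_exp (MN L) (W bs) (W cs)"
proof (induction bs arbitrary: cs)
  case Nil then show ?case by simp
next
  case (Cons b bs)
  then obtain c cs' where cs: "cs = c # cs'" by (cases cs) auto
  with Cons.prems have lcs: "length bs = length cs'" by simp
  show ?case
  proof (cases "bs = cs'")
    case False
    with Cons.IH lcs have "\<not> suffix_exp (MN L) (W bs) (W cs')" by blast
    then obtain i where i: "i < length (W bs)" "\<not> MN L (drop i (W bs)) (drop i (W cs'))"
      using lcs W_len unfolding suffix_exp_def by auto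
    let ?X = "if b then UU else VV" and ?Y = "if c then UU else VV"
    have lx: "length ?X = ell" "length ?Y = ell" using len_UUVV by auto
    have "drop (ell + i) (W (b # bs)) = drop i (W bs)"
      unfolding W_Cons using lx by simp
    moreover have "drop (ell + i) (W cs) = drop i (W cs')"
      unfolding cs W_Cons using lx by simp
    moreover have "ell + i < length (W (b # bs))" using i W_len by simp
    ultimately show ?thesis using i unfolding suffix_exp_def by metis
  next
    case True
    with Cons.prems cs have bc: "b \<noteq> c" by simp
    obtain UU1 where UU1: "UU = UU1 @ u2" "length UU1 = ell - length u2" using UU_split by blast
    obtain VV1 where VV1: "VV = VV1 @ v2" "length VV1 = ell - length u2" using VV_split by blast
    let ?i = "ell - length u2"
    have i: "?i < length (W (b # bs))" using W_len lens ell_pos by simp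
    have dU: "drop ?i (UU @ W bs) = u2 @ W bs" using UU1 by simp
    have dV: "drop ?i (VV @ W bs) = v2 @ W bs" using VV1 by simp
    have nm: "\<not> MN L (u2 @ W bs) (v2 @ W bs)" using notMN W_star by blast
    show ?thesis
    proof (cases b)
      case True
      then have "\<not> MN L (drop ?i (W (b # bs))) (drop ?i (W cs))"
        using bc cs \<open>bs = cs'\<close> dU dV nm by (simp add: W_Cons)
      then show ?thesis using i unfolding suffix_exp_def by blast
    next
      case False
      then have "\<not> MN L (drop ?i (W (b # bs))) (drop ?i (W cs))"
        using bc cs \<open>bs = cs'\<close> dU dV nm by (auto simp: W_Cons dest: MN_sym)
      then show ?thesis using i unfolding suffix_exp_def by blast
    qed
  qed
qed



end

lemma crit_card_lower:
  fixes L :: "('a::finite) list set"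
  assumes "critical_tuple (MN L) u2 v2 u v"
  shows "\<exists>l\<ge>1. \<forall>m. 2 ^ m \<le> card (approx_classes L (m * l))"
proof -
  interpret crit L u2 v2 u v using assms by unfold_locales
  have "2 ^ m \<le> card (approx_classes L (m * ell))" for m
  proof -
    let ?f = "\<lambda>bs. SRel L `` {W bs}"
    have inj: "inj_on ?f {bs. length bs = m}"
    proof (rule inj_onI)
      fix bs cs assume "bs \<in> {bs. length bs = m}" "cs \<in> {bs. length bs = m}" "?f bs = ?f cs"
      then have "suffix_exp (MN L) (W bs) (W cs)" "length bs = length cs"
        using SRel_Image_eqD by auto
      then show "bs = cs" using W_inj by blast
    qed
    have sub: "?f ` {bs. length bs = m} \<subseteq> approx_classes L (m * ell)"
      unfolding approx_classes_eq using W_len by auto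
    have "card {bs::bool list. length bs = m} = 2 ^ m"
      using card_lists_length_eq[of "UNIV::bool set" m] by simp
    then have "2 ^ m = card (?f ` {bs. length bs = m})"
      using card_image[OF inj] by simp
    also have "\<dots> \<le> card (approx_classes L (m * ell))"
      by (rule card_mono[OF finite_approx sub])
    finally show ?thesis .
  qed
  then show ?thesis using ell_pos by blast
qed

lemma crit_not_poly:
  fixes L :: "('a::finite) list set"
  assumes "critical_tuple (MN L) u2 v2 u v"
  shows "\<not> (\<exists>k::nat. (\<lambda>n. real (card (approx_classes L n))) \<in> O(\<lambda>n. real n ^ k))"
proof
  assume "\<exists>k::nat. (\<lambda>n. real (card (approx_classes L n))) \<in> O(\<lambda>n. real n ^ k)"
  then obtain k where k: "(\<lambda>n. real (card (approx_classes L n))) \<in> O(\<lambda>n. real n ^ k)" by blast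
  obtain l where l: "l \<ge> 1" "\<And>m. 2 ^ m \<le> card (approx_classes L (m * l))"
    using crit_card_lower[OF assms] by blast
  from k obtain c where c: "c > 0" "eventually (\<lambda>n. norm (real (card (approx_classes L n))) \<le> c * norm (real n ^ k)) at_top"
    by (elim landau_o.bigE)
  then obtain N where N: "\<And>n. n \<ge> N \<Longrightarrow> real (card (approx_classes L n)) \<le> c * real n ^ k"
    by (auto simp: eventually_at_top_linorder)
  have "(\<lambda>m::nat. c * real l ^ k * real m ^ k) \<in> o(\<lambda>m. 2 ^ m)" by real_asymp
  then have "eventually (\<lambda>m::nat. norm (c * real l ^ k * real m ^ k) \<le> (1/2) * norm ((2::real) ^ m)) at_top"
    by (intro landau_o.smallD) auto
  then obtain M where M: "\<And>m. m \<ge> M \<Longrightarrow> c * real l ^ k * real m ^ k \<le> (1/2) * 2 ^ m"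
    using c(1) by (auto simp: eventually_at_top_linorder)
  define m where "m = max M N"
  have "m * l \<ge> N" using l(1) unfolding m_def
    by (metis le_trans max.cobounded2 mult.right_neutral mult_le_mono2)
  then have "real (card (approx_classes L (m * l))) \<le> c * real (m * l) ^ k" using N by blast
  also have "\<dots> = c * real l ^ k * real m ^ k" by (simp add: power_mult_distrib)
  also have "\<dots> \<le> (1/2) * 2 ^ m" using M unfolding m_def by simp
  finally have "real (card (approx_classes L (m * l))) \<le> (1/2) * 2 ^ m" .
  moreover have "(2::real) ^ m \<le> real (card (approx_classes L (m * l)))"
    using l(2)[of m] by (metis of_nat_numeral of_nat_power of_nat_le_iff)
  moreover have "(2::real) ^ m > 0" by simp
  ultimately show False by linarith
qed

definition pw :: "'a list \<Rightarrow> nat \<Rightarrow> 'a list" where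
  "pw X k = concat (replicate k X)"

lemma pw_add: "pw X (m + n) = pw X m @ pw X n"
  unfolding pw_def by (simp add: replicate_add)

lemma pw_Suc: "pw X (Suc n) = X @ pw X n" unfolding pw_def by simp
lemma pw_Suc': "pw X (Suc n) = pw X n @ X"
  using pw_add[of X n 1] by (simp add: pw_def)
lemma pw_0[simp]: "pw X 0 = []" unfolding pw_def by simp
lemma pw_len: "length (pw X n) = n * length X" unfolding pw_def by (simp add: length_concat_rep)
lemma pw_star: "X \<in> star2 u v \<Longrightarrow> pw X k \<in> star2 u v" unfolding pw_def by (rule star2_rep)

locale dfa =
  fixes L :: "('a::finite) list set" and Q :: "nat set" and q0 :: nat
    and \<delta> :: "nat \<Rightarrow> 'a \<Rightarrow> nat" and F :: "nat set"
  assumes finQ: "finite Q" and q0Q: "q0 \<in> Q" and closed: "\<And>q a. q \<in> Q \<Longrightarrow> \<delta> q a \<in> Q"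
    and lang: "\<And>w. w \<in> L \<longleftrightarrow> foldl \<delta> q0 w \<in> F"
begin

definition st :: "nat \<Rightarrow> 'a list \<Rightarrow> nat" where "st q w = foldl \<delta> q w"

lemma st_app: "st q (x @ y) = st (st q x) y" unfolding st_def by simp
lemma st_Nil[simp]: "st q [] = q" unfolding st_def by simp
lemma st_Cons: "st q (a # w) = st (\<delta> q a) w" unfolding st_def by simp

lemma st_Q: "q \<in> Q \<Longrightarrow> st q w \<in> Q"
  by (induction w arbitrary: q) (auto simp: st_Cons closed)

definition eqv :: "'a list \<Rightarrow> 'a list \<Rightarrow> bool" where
  "eqv x y \<longleftrightarrow> (\<forall>q\<in>Q. st q x = st q y)"

lemma eqv_refl[simp]: "eqv x x" by (simp add: eqv_def)
lemma eqv_sym: "eqv x y \<Longrightarrow> eqv y x" by (simp add: eqv_def)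
lemma eqv_trans: "eqv x y \<Longrightarrow> eqv y z \<Longrightarrow> eqv x z" by (simp add: eqv_def)
lemma eqv_appR: "eqv x y \<Longrightarrow> eqv (x @ z) (y @ z)" by (simp add: eqv_def st_app)
lemma eqv_appL: "eqv x y \<Longrightarrow> eqv (z @ x) (z @ y)" by (simp add: eqv_def st_app st_Q)

lemma st_MN: "st q0 x = st q0 y \<Longrightarrow> MN L x y"
  unfolding MN_def using lang by (simp add: st_def[symmetric] st_app)

lemma eqv_MN: "eqv x y \<Longrightarrow> MN L x y"
  using st_MN q0Q unfolding eqv_def by blast

definition img :: "'a list \<Rightarrow> nat set" where "img w = (\<lambda>q. st q w) ` Q"

lemma img_fin: "finite (img w)" unfolding img_def using finQ by simp
lemma img_app: "img (x @ y) \<subseteq> img y"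
  unfolding img_def by (auto simp: st_app st_Q)
lemma img_Q: "img w \<subseteq> Q" unfolding img_def using st_Q by auto

definition tr :: "'a list \<Rightarrow> (nat \<Rightarrow> nat)" where "tr w = restrict (\<lambda>q. st q w) Q"

lemma tr_eq_iff: "tr x = tr y \<longleftrightarrow> eqv x y"
proof
  assume "tr x = tr y"
  then show "eqv x y" unfolding eqv_def tr_def by (metis restrict_apply')
next
  assume "eqv x y"
  then show "tr x = tr y" unfolding eqv_def tr_def by (intro restrict_ext) auto
qed

lemma tr_in: "tr w \<in> Q \<rightarrow>\<^sub>E Q" unfolding tr_def using st_Q by auto

lemma finite_TR: "finite (range tr)"
  by (rule finite_subset[of _ "Q \<rightarrow>\<^sub>E Q"]) (use tr_in finQ in \<open>auto intro: finite_PiE\<close>)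

lemma idem_pow: "\<exists>k\<ge>1. eqv (pw X k @ pw X k) (pw X k)"
proof -
  let ?g = "\<lambda>j. tr (pw X j)"
  have "\<not> inj_on ?g {1..}"
  proof
    assume inj: "inj_on ?g {1..}"
    have "finite (?g ` {1..})" using finite_TR by (rule finite_subset[rotated]) auto
    then have "finite {1::nat..}" using finite_imageD[OF _ inj] by blast
    then show False using infinite_Ici by blast
  qed
  then obtain a b where ab: "a \<ge> 1" "b \<ge> 1" "a \<noteq> b" "?g a = ?g b"
    unfolding inj_on_def by auto
  then obtain a b where ab: "a \<ge> 1" "a < b" "eqv (pw X a) (pw X b)"
    by (metis tr_eq_iff nat_neq_iff)
  define p where "p = b - a"
  have p: "p \<ge> 1" "b = a + p" using ab unfolding p_def by auto
  have step: "eqv (pw X (a + j)) (pw X (a + j + p))" for j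
  proof -
    have "eqv (pw X a @ pw X j) (pw X b @ pw X j)" by (rule eqv_appR[OF ab(3)])
    then show ?thesis unfolding pw_add[symmetric] p(2) by (simp add: ac_simps)
  qed
  have gen: "eqv (pw X (a + j)) (pw X (a + j + t * p))" for j t
  proof (induction t)
    case (Suc t)
    have "eqv (pw X (a + (j + t * p))) (pw X (a + (j + t * p) + p))" by (rule step)
    then show ?case using Suc by (auto simp: ac_simps intro: eqv_trans)
  qed simp
  define k where "k = a * p"
  have k: "k \<ge> 1" "k \<ge> a" using ab p unfolding k_def by auto
  have "eqv (pw X (a + (k - a))) (pw X (a + (k - a) + a * p))" by (rule gen)
  then have "eqv (pw X k) (pw X (k + k))" using k unfolding k_def by simp
  then have "eqv (pw X k @ pw X k) (pw X k)" unfolding pw_add by (rule eqv_sym)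
  then show ?thesis using k by blast
qed

lemma idem_mult:
  assumes "eqv (pw X k @ pw X k) (pw X k)" "j \<ge> 1"
  shows "eqv (pw X (j * k)) (pw X k)"
  using assms(2)
proof (induction j rule: dec_induct)
  case (step j)
  have "pw X (Suc j * k) = pw X (j * k) @ pw X k" by (simp add: pw_add[symmetric] ac_simps)
  moreover have "eqv (pw X (j * k) @ pw X k) (pw X k @ pw X k)" by (rule eqv_appR[OF step.IH])
  ultimately show ?case using assms(1) eqv_trans by metis
qed simp

lemma idem_of_eqv: "eqv A B \<Longrightarrow> eqv (B @ B) B \<Longrightarrow> eqv (A @ A) A"
  by (meson eqv_appL eqv_appR eqv_sym eqv_trans)

lemma star2_loop:
  assumes "eqv (P @ t) t" "eqv (R @ t) t" "w \<in> star2 P R"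
  shows "eqv (w @ t) t"
proof -
  obtain ws where ws: "w = concat ws" "set ws \<subseteq> {P, R}" using assms(3) unfolding star2_def by blast
  have "eqv (concat ws @ t) t" using ws(2)
  proof (induction ws)
    case (Cons x ws)
    then have "eqv (x @ t) t" using assms by auto
    then have "eqv (x @ (concat ws @ t)) (x @ t)" using Cons eqv_appL by auto
    then show ?case using \<open>eqv (x @ t) t\<close> by (auto intro: eqv_trans)
  qed simp
  then show ?thesis using ws by simp
qed

lemma nocrit_idem:
  assumes nc: "\<not> (\<exists>u2 v2 u v. critical_tuple (MN L) u2 v2 u v)"
    and T: "eqv (T @ T) T" and P: "eqv (P @ T) T" and R: "eqv (R @ T) T"
    and len: "length P = length R" and i: "i < length P"
  shows "MN L (drop i P @ T) (drop i R @ T)"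
proof -
  have "\<not> critical_tuple (MN L) (drop i P @ T) (drop i R @ T) (P @ T) (R @ T)" using nc by blast
  moreover have "\<exists>u1. P @ T = u1 @ (drop i P @ T)" by (rule exI[of _ "take i P"]) simp
  moreover have "\<exists>u1. R @ T = u1 @ (drop i R @ T)" by (rule exI[of _ "take i R"]) simp
  ultimately obtain w where w: "w \<in> star2 (P @ T) (R @ T)" "MN L (drop i P @ T @ w) (drop i R @ T @ w)"
    using len i unfolding critical_tuple_def by auto
  have TT: "eqv ((P @ T) @ T) T" "eqv ((R @ T) @ T) T"
    using eqv_appR[OF P, of T] eqv_appR[OF R, of T] T by (auto intro: eqv_trans)
  have "eqv (T @ w) T"
  proof -
    obtain ws where ws: "w = concat ws" "set ws \<subseteq> {P @ T, R @ T}" using w(1) unfolding star2_def by blast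
    have "eqv (T @ concat ws) T" using ws(2)
    proof (induction ws rule: rev_induct)
      case (snoc x ws)
      then have x: "x = P @ T \<or> x = R @ T" and IH: "eqv (T @ concat ws) T" by auto
      have "eqv (T @ concat ws @ x) (T @ x)" using eqv_appR[OF IH, of x] by simp
      moreover have "eqv (T @ x) (T @ T)" using x eqv_appL[OF P, of T] eqv_appL[OF R, of T] by auto
      ultimately show ?case using T by (auto intro: eqv_trans)
    qed simp
    then show ?thesis using ws by simp
  qed
  then have "MN L (drop i P @ T @ w) (drop i P @ T)" "MN L (drop i R @ T @ w) (drop i R @ T)"
    using eqv_MN eqv_appL by (metis append.assoc)+
  then show ?thesis using w(2) by (meson MN_sym MN_trans)
qed

lemma rank_eqv:
  assumes E: "eqv (E @ E) E" and G: "eqv (G @ G) G" and G1: "G = E @ G'" and G2: "G = G'' @ E"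
    and card: "card (img E) \<le> card (img G)"
  shows "eqv G E"
proof -
  have "img G \<subseteq> img E" using G2 img_app by metis
  then have imgeq: "img G = img E" using card_seteq[OF img_fin[of E] _ card] by blast
  show ?thesis unfolding eqv_def
  proof
    fix q assume q: "q \<in> Q"
    define p where "p = st q E"
    have "p \<in> img G" using q imgeq unfolding p_def img_def by auto
    then obtain q' where q': "q' \<in> Q" "p = st q' G" unfolding img_def by auto
    have pG: "st p G = p" using G q' unfolding eqv_def by (simp add: st_app)
    have pE: "st p E = p" using E q unfolding p_def eqv_def by (simp add: st_app)
    have "st q G = st p G'" unfolding G1 st_app p_def ..
    also have "\<dots> = st p G" unfolding G1 st_app pE ..
    also have "\<dots> = st q E" using pG p_def by simp
    finally show "st q G = st q E" .
  qed
qed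

lemma loop_labels:
  assumes nc: "\<not> (\<exists>u2 v2 u v. critical_tuple (MN L) u2 v2 u v)"
    and P: "eqv (P @ t) t" and R: "eqv (R @ t) t"
    and len: "length P = length R" and i: "i < length P"
  shows "MN L (drop i P @ t) (drop i R @ t)"
proof -
  let ?S = "star2 P R"
  define r where "r = Min ((\<lambda>W. card (img W)) ` ?S)"
  have finS: "finite ((\<lambda>W. card (img W)) ` ?S)"
  proof (rule finite_subset[of _ "{..card Q}"])
    show "(\<lambda>W. card (img W)) ` ?S \<subseteq> {..card Q}"
    proof (rule image_subsetI)
      fix W show "card (img W) \<in> {..card Q}" using card_mono[OF finQ img_Q[of W]] by simp
    qed
  qed simp
  have "r \<in> (\<lambda>W. card (img W)) ` ?S" unfolding r_def
    by (rule Min_in[OF finS]) (use star2_Nil in blast)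
  then obtain E0 where E0: "E0 \<in> ?S" "card (img E0) = r" by auto
  have rmin: "\<And>W. W \<in> ?S \<Longrightarrow> r \<le> card (img W)" unfolding r_def using finS by simp
  obtain k1 where k1: "k1 \<ge> 1" "eqv (pw E0 k1 @ pw E0 k1) (pw E0 k1)" using idem_pow by blast
  define E where "E = pw E0 k1"
  have ES: "E \<in> ?S" unfolding E_def using E0 pw_star by blast
  have EE: "eqv (E @ E) E" using k1 unfolding E_def by simp
  have cardE: "card (img E) = r"
  proof -
    obtain k' where "k1 = Suc k'" using k1 by (cases k1) auto
    then have "E = pw E0 k' @ E0" unfolding E_def by (simp add: pw_Suc')
    then have "img E \<subseteq> img E0" using img_app by metis
    then have "card (img E) \<le> r" using E0 img_fin card_mono by metis
    then show ?thesis using rmin[OF ES] by simp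
  qed
  define X where "X = E @ P @ E"
  define Y where "Y = E @ R @ E"
  have XS: "X \<in> ?S" "Y \<in> ?S" unfolding X_def Y_def by (intro star2_app ES star2_u star2_v)+
  obtain kx where kx: "kx \<ge> 1" "eqv (pw X kx @ pw X kx) (pw X kx)" using idem_pow by blast
  obtain ky where ky: "ky \<ge> 1" "eqv (pw Y ky @ pw Y ky) (pw Y ky)" using idem_pow by blast
  define K where "K = kx * ky"
  have K: "K \<ge> 1" unfolding K_def using kx ky by simp
  define G where "G = pw X K"
  define H where "H = pw Y K"
  have GG: "eqv (G @ G) G"
  proof -
    have "eqv G (pw X kx)" unfolding G_def K_def using idem_mult[OF kx(2), of ky] ky(1) by (simp add: ac_simps)
    then show ?thesis using idem_of_eqv kx(2) by blast
  qed
  have HH: "eqv (H @ H) H"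
  proof -
    have "eqv H (pw Y ky)" unfolding H_def K_def using idem_mult[OF ky(2), of kx] kx(1) by (simp add: ac_simps)
    then show ?thesis using idem_of_eqv ky(2) by blast
  qed
  obtain K' where K': "K = Suc K'" using K by (cases K) auto
  have G1: "G = E @ (P @ E @ pw X K')" unfolding G_def K' pw_Suc X_def by simp
  have G2: "G = (pw X K' @ E @ P) @ E" unfolding G_def K' pw_Suc' X_def by simp
  have H1: "H = E @ (R @ E @ pw Y K')" unfolding H_def K' pw_Suc Y_def by simp
  have H2: "H = (pw Y K' @ E @ R) @ E" unfolding H_def K' pw_Suc' Y_def by simp
  have GS: "G \<in> ?S" "H \<in> ?S" unfolding G_def H_def using XS pw_star by auto
  have GE: "eqv G E" by (rule rank_eqv[OF EE GG G1 G2]) (use cardE rmin[OF GS(1)] in simp)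
  have HE: "eqv H E" by (rule rank_eqv[OF EE HH H1 H2]) (use cardE rmin[OF GS(2)] in simp)
  have GEE: "eqv (G @ E) E" using eqv_appR[OF GE, of E] EE eqv_trans by blast
  have HEE: "eqv (H @ E) E" using eqv_appR[OF HE, of E] EE eqv_trans by blast
  have lenGH: "length G = length H" unfolding G_def H_def pw_len X_def Y_def using len by simp
  define j where "j = length E + i"
  have j: "j < length G" unfolding j_def G1 using i by simp
  have "MN L (drop j G @ E) (drop j H @ E)" by (rule nocrit_idem[OF nc EE GEE HEE lenGH j])
  then have m1: "MN L (drop j G @ E @ t) (drop j H @ E @ t)" using MN_app by fastforce
  have dG: "drop j G = drop i P @ E @ pw X K'" unfolding G1 j_def using i by simp
  have dH: "drop j H = drop i R @ E @ pw Y K'" unfolding H1 j_def using i len by simp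
  have ZS: "E @ pw X K' @ E \<in> ?S" "E @ pw Y K' @ E \<in> ?S"
    using ES XS pw_star by (auto intro!: star2_app)
  have "eqv ((E @ pw X K' @ E) @ t) t" by (rule star2_loop[OF P R ZS(1)])
  then have z1: "MN L (drop j G @ E @ t) (drop i P @ t)"
    unfolding dG using eqv_MN eqv_appL by (metis append.assoc)
  have "eqv ((E @ pw Y K' @ E) @ t) t" by (rule star2_loop[OF P R ZS(2)])
  then have z2: "MN L (drop j H @ E @ t) (drop i R @ t)"
    unfolding dH using eqv_MN eqv_appL by (metis append.assoc)
  show ?thesis using m1 z1 z2 by (meson MN_sym MN_trans)
qed

end

context dfa begin

definition cls :: "'a list \<Rightarrow> 'a list set" where "cls y = {z. MN L y z}"

lemma cls_eq: "MN L y z \<Longrightarrow> cls y = cls z"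
  unfolding cls_def by (auto intro: MN_trans MN_sym)

lemma cls_eqD: "cls y = cls z \<Longrightarrow> MN L y z"
  unfolding cls_def by auto

definition vec :: "'a list \<Rightarrow> 'a list \<Rightarrow> 'a list set list" where
  "vec t x = map (\<lambda>i. cls (drop i x @ t)) [0..<length x]"

lemma vec_len[simp]: "length (vec t x) = length x" unfolding vec_def by simp

lemma vec_nth: "i < length x \<Longrightarrow> vec t x ! i = cls (drop i x @ t)"
  unfolding vec_def by simp

lemma vec_app: "vec t (u @ v) = vec (v @ t) u @ vec t v"
proof (rule nth_equalityI)
  fix i assume "i < length (vec t (u @ v))"
  then have i: "i < length u + length v" by simp
  show "vec t (u @ v) ! i = (vec (v @ t) u @ vec t v) ! i"
  proof (cases "i < length u")
    case True then show ?thesis using i by (simp add: vec_nth nth_append)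
  next
    case False then show ?thesis using i by (simp add: vec_nth nth_append)
  qed
qed simp

lemma vec_eqv: "eqv t t' \<Longrightarrow> vec t x = vec t' x"
  unfolding vec_def by (auto intro!: cls_eq eqv_MN eqv_appL)

definition Cls where "Cls = range cls"

lemma finite_Cls: "finite Cls"
proof -
  define rep where "rep q = (SOME y. st q0 y = q)" for q
  have "Cls \<subseteq> (\<lambda>q. cls (rep q)) ` Q"
  proof
    fix c assume "c \<in> Cls"
    then obtain y where y: "c = cls y" unfolding Cls_def by auto
    have "st q0 (rep (st q0 y)) = st q0 y" unfolding rep_def by (rule someI[of _ y]) simp
    then have "cls y = cls (rep (st q0 y))" by (intro cls_eq st_MN) simp
    then show "c \<in> (\<lambda>q. cls (rep q)) ` Q" using y st_Q q0Q by auto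
  qed
  then show ?thesis using finQ finite_surj by blast
qed

lemma vec_in: "vec t x \<in> {v. set v \<subseteq> Cls \<and> length v = length x}"
  unfolding vec_def Cls_def by auto

definition vals :: "'a list \<Rightarrow> 'a list \<Rightarrow> (nat \<Rightarrow> nat) set" where
  "vals t x = (\<lambda>i. tr (drop i x @ t)) ` {0..length x}"

definition Lam :: "'a list \<Rightarrow> nat \<Rightarrow> 'a list set list" where
  "Lam t l = vec t (SOME P. length P = l \<and> eqv (P @ t) t)"

lemma loop_vec:
  assumes nc: "\<not> (\<exists>u2 v2 u v. critical_tuple (MN L) u2 v2 u v)" and P: "eqv (P @ t) t"
  shows "vec t P = Lam t (length P)"
proof -
  define R where "R = (SOME R. length R = length P \<and> eqv (R @ t) t)"
  have R: "length R = length P \<and> eqv (R @ t) t" unfolding R_def by (rule someI[of _ P]) (use P in simp)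
  show ?thesis unfolding Lam_def R_def[symmetric]
  proof (rule nth_equalityI)
    fix i assume "i < length (vec t P)"
    then have i: "i < length P" by simp
    have "MN L (drop i P @ t) (drop i R @ t)"
      by (rule loop_labels[OF nc P]) (use R i in auto)
    then show "vec t P ! i = vec t R ! i" using i R by (simp add: vec_nth cls_eq)
  qed (use R in simp)
qed

definition SS :: "'a list \<Rightarrow> nat \<Rightarrow> (nat \<Rightarrow> nat) set \<Rightarrow> 'a list set list set" where
  "SS t n VS = {vec t x | x. length x = n \<and> vals t x \<subseteq> VS}"

lemma finite_SS: "finite (SS t n VS)"
proof (rule finite_subset)
  show "SS t n VS \<subseteq> {v. set v \<subseteq> Cls \<and> length v = n}" unfolding SS_def using vec_in by auto
  show "finite {v. set v \<subseteq> Cls \<and> length v = n}" by (rule finite_lists_length_eq[OF finite_Cls])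
qed

lemma SS_decomp:
  assumes nc: "\<not> (\<exists>u2 v2 u v. critical_tuple (MN L) u2 v2 u v)"
  shows "SS t n VS \<subseteq> {Lam t n} \<union>
     (\<Union>a\<in>UNIV. \<Union>l\<in>{..<n}. (\<lambda>v. v @ [cls (a # t)] @ Lam t l) ` SS (a # t) (n - l - 1) (VS - {tr t}))"
proof
  fix v assume "v \<in> SS t n VS"
  then obtain x where x: "v = vec t x" "length x = n" "vals t x \<subseteq> VS" unfolding SS_def by auto
  define i where "i = (LEAST i. tr (drop i x @ t) = tr t)"
  have ex: "tr (drop (length x) x @ t) = tr t" by simp
  have i_le: "i \<le> length x" unfolding i_def by (rule Least_le) (rule ex)
  have i_tr: "tr (drop i x @ t) = tr t" unfolding i_def by (rule LeastI) (rule ex)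
  have i_min: "\<And>j. j < i \<Longrightarrow> tr (drop j x @ t) \<noteq> tr t" unfolding i_def by (rule not_less_Least)
  define P where "P = drop i x"
  have Ploop: "eqv (P @ t) t" using i_tr tr_eq_iff unfolding P_def by blast
  show "v \<in> {Lam t n} \<union>
     (\<Union>a\<in>UNIV. \<Union>l\<in>{..<n}. (\<lambda>v. v @ [cls (a # t)] @ Lam t l) ` SS (a # t) (n - l - 1) (VS - {tr t}))"
  proof (cases i)
    case 0
    then have "v = Lam t n" using x loop_vec[OF nc Ploop] unfolding P_def by simp
    then show ?thesis by simp
  next
    case (Suc i')
    define y' where "y' = take i' x"
    define a where "a = x ! i'"
    have xi: "i' < length x" using Suc i_le by simp
    have xdec: "x = y' @ [a] @ P" unfolding y'_def a_def P_def Suc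
      using xi by (simp add: Cons_nth_drop_Suc)
    define l where "l = length P"
    have l: "l < n" "length y' = n - l - 1" unfolding l_def P_def y'_def using x(2) xi Suc by auto
    have e1: "eqv ([a] @ P @ t) ([a] @ t)" by (rule eqv_appL[OF Ploop])
    have "v = vec ([a] @ P @ t) y' @ vec (P @ t) [a] @ vec t P"
      unfolding x(1) xdec vec_app by simp
    also have "vec ([a] @ P @ t) y' = vec (a # t) y'" using vec_eqv[OF e1] by simp
    also have "vec (P @ t) [a] = [cls (a # t)]"
      using cls_eq[OF eqv_MN[OF e1]] by (simp add: vec_def)
    also have "vec t P = Lam t l" unfolding l_def by (rule loop_vec[OF nc Ploop])
    finally have v: "v = vec (a # t) y' @ [cls (a # t)] @ Lam t l" .
    have "vals (a # t) y' \<subseteq> VS - {tr t}"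
    proof
      fix f assume "f \<in> vals (a # t) y'"
      then obtain j where j: "j \<le> length y'" "f = tr (drop j y' @ a # t)" unfolding vals_def by auto
      have "eqv (drop j y' @ [a] @ P @ t) (drop j y' @ [a] @ t)" by (rule eqv_appL[OF e1])
      then have "tr (drop j y' @ [a] @ P @ t) = tr (drop j y' @ [a] @ t)" using tr_eq_iff by blast
      then have "f = tr (drop j y' @ [a] @ P @ t)" using j(2) by simp
      also have "drop j y' @ [a] @ P @ t = drop j x @ t" unfolding xdec using j by simp
      finally have f: "f = tr (drop j x @ t)" .
      have "j < i" using j l Suc xi unfolding y'_def by simp
      then have "f \<noteq> tr t" using i_min f by simp
      moreover have "f \<in> VS" using x(3) f j xi unfolding vals_def y'_def by auto
      ultimately show "f \<in> VS - {tr t}" by simp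
    qed
    then have "vec (a # t) y' \<in> SS (a # t) (n - l - 1) (VS - {tr t})"
      unfolding SS_def using l by auto
    then show ?thesis using v l by blast
  qed
qed

lemma SS_empty: "tr t \<notin> VS \<Longrightarrow> SS t n VS = {}"
  unfolding SS_def vals_def by force

lemma card_SS:
  assumes nc: "\<not> (\<exists>u2 v2 u v. critical_tuple (MN L) u2 v2 u v)"
  shows "finite VS \<Longrightarrow> n' \<le> n \<Longrightarrow> card (SS t n' VS) \<le> (card (UNIV::'a set) * (n + 1) + 1) ^ card VS"
proof (induction "card VS" arbitrary: VS t n')
  case 0
  then have "VS = {}" by simp
  then show ?case using SS_empty by simp
next
  case (Suc k)
  let ?s = "card (UNIV::'a set)"
  let ?B = "(?s * (n + 1) + 1) ^ k"
  show ?case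
  proof (cases "tr t \<in> VS")
    case False then show ?thesis using SS_empty by simp
  next
    case True
    let ?VS' = "VS - {tr t}"
    have cV': "card ?VS' = k" using Suc.hyps(2) True Suc.prems by simp
    have IH: "card (SS t' m ?VS') \<le> ?B" if m: "m \<le> n" for t' m
    proof -
      have "finite ?VS'" using Suc.prems by simp
      from Suc.hyps(1)[OF cV'[symmetric] this m] show ?thesis using cV' by simp
    qed
    let ?U = "\<Union>a\<in>UNIV. \<Union>l\<in>{..<n'}. (\<lambda>v. v @ [cls (a # t)] @ Lam t l) ` SS (a # t) (n' - l - 1) ?VS'"
    have finU: "finite ?U" using finite_SS by auto
    have "card (SS t n' VS) \<le> card ({Lam t n'} \<union> ?U)"
      by (rule card_mono) (use finU SS_decomp[OF nc] in auto)
    also have "\<dots> \<le> 1 + card ?U" using card_Un_le[of "{Lam t n'}" ?U] by simp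
    also have "card ?U \<le> (\<Sum>a\<in>UNIV. card (\<Union>l\<in>{..<n'}. (\<lambda>v. v @ [cls (a # t)] @ Lam t l) ` SS (a # t) (n' - l - 1) ?VS'))"
      by (rule card_UN_le) simp
    also have "\<dots> \<le> (\<Sum>a\<in>(UNIV::'a set). (\<Sum>l\<in>{..<n'}. card ((\<lambda>v. v @ [cls (a # t)] @ Lam t l) ` SS (a # t) (n' - l - 1) ?VS')))"
      by (intro sum_mono card_UN_le) simp
    also have "\<dots> \<le> (\<Sum>a\<in>(UNIV::'a set). (\<Sum>l\<in>{..<n'}. ?B))"
    proof (intro sum_mono)
      fix a l assume "l \<in> {..<n'}"
      have "card ((\<lambda>v. v @ [cls (a # t)] @ Lam t l) ` SS (a # t) (n' - l - 1) ?VS') \<le> card (SS (a # t) (n' - l - 1) ?VS')"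
        by (rule card_image_le[OF finite_SS])
      also have "\<dots> \<le> ?B" by (rule IH) (use Suc.prems in simp)
      finally show "card ((\<lambda>v. v @ [cls (a # t)] @ Lam t l) ` SS (a # t) (n' - l - 1) ?VS') \<le> ?B" .
    qed
    also have "\<dots> = ?s * (n' * ?B)" by simp
    finally have "card (SS t n' VS) \<le> 1 + ?s * (n' * ?B)" by simp
    also have "\<dots> \<le> 1 + ?s * ((n + 1) * ?B)"
      by (intro add_left_mono mult_left_mono mult_right_mono) (use Suc.prems in auto)
    also have "\<dots> \<le> (?s * (n + 1) + 1) * ?B"
    proof -
      have "?B \<ge> 1" by simp
      then show ?thesis by (simp add: algebra_simps)
    qed
    also have "\<dots> = (?s * (n + 1) + 1) ^ card VS" unfolding Suc.hyps(2)[symmetric] by (simp only: power_Suc)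
    finally show ?thesis .
  qed
qed

lemma vec_SRel: "length x = length y \<Longrightarrow> vec [] x = vec [] y \<Longrightarrow> suffix_exp (MN L) x y"
  unfolding suffix_exp_def
proof (intro conjI allI impI)
  fix i assume "length x = length y" "vec [] x = vec [] y" "i < length x"
  then have "vec [] x ! i = vec [] y ! i" by simp
  then show "MN L (drop i x) (drop i y)" using \<open>i < length x\<close> \<open>length x = length y\<close>
    by (simp add: vec_nth cls_eqD)
qed

lemma card_classes_len:
  assumes nc: "\<not> (\<exists>u2 v2 u v. critical_tuple (MN L) u2 v2 u v)" and m: "m \<le> n"
  shows "card (classes_len L m) \<le> (card (UNIV::'a set) * (n + 1) + 1) ^ card (range tr)"
proof -
  define g where "g v = SRel L `` {SOME x. length x = m \<and> vec [] x = v}" for v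
  have "classes_len L m \<subseteq> g ` SS [] m (range tr)"
  proof
    fix c assume "c \<in> classes_len L m"
    then obtain x where x: "length x = m" "c = SRel L `` {x}" unfolding classes_len_def by auto
    define y where "y = (SOME y. length y = m \<and> vec [] y = vec [] x)"
    have y: "length y = m \<and> vec [] y = vec [] x" unfolding y_def by (rule someI[of _ x]) (use x in simp)
    then have "suffix_exp (MN L) y x" using vec_SRel x by simp
    then have "c = g (vec [] x)" unfolding g_def y_def[symmetric] x(2) using SRel_Image_eq by metis
    moreover have "vec [] x \<in> SS [] m (range tr)" unfolding SS_def vals_def using x by auto
    ultimately show "c \<in> g ` SS [] m (range tr)" by blast
  qed
  then have "card (classes_len L m) \<le> card (g ` SS [] m (range tr))"
    by (intro card_mono finite_imageI finite_SS)
  also have "\<dots> \<le> card (SS [] m (range tr))" by (rule card_image_le[OF finite_SS])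
  also have "\<dots> \<le> (card (UNIV::'a set) * (n + 1) + 1) ^ card (range tr)"
    by (rule card_SS[OF nc finite_TR m])
  finally show ?thesis .
qed

lemma nocrit_poly:
  assumes nc: "\<not> (\<exists>u2 v2 u v. critical_tuple (MN L) u2 v2 u v)"
  shows "\<exists>k::nat. (\<lambda>n. real (card (approx_classes L n))) \<in> O(\<lambda>n. real n ^ k)"
proof -
  let ?s = "card (UNIV::'a set)" and ?K = "card (range tr)"
  have b: "card (approx_classes L n) \<le> (n + 1) * (?s * (n + 1) + 1) ^ ?K" for n
  proof -
    have "card (approx_classes L n) \<le> (\<Sum>m\<le>n. card (classes_len L m))" by (rule card_approx_le_sum)
    also have "\<dots> \<le> (\<Sum>m\<le>n. (?s * (n + 1) + 1) ^ ?K)"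
      by (intro sum_mono card_classes_len[OF nc]) simp
    finally show ?thesis by simp
  qed
  have "(\<lambda>n. real (card (approx_classes L n))) \<in> O(\<lambda>n. real n ^ (?K + 1))"
  proof (rule bigoI[where c = "(2 * (real ?s + 1)) ^ (?K + 1)"])
    show "eventually (\<lambda>n. norm (real (card (approx_classes L n))) \<le> (2 * (real ?s + 1)) ^ (?K + 1) * norm (real n ^ (?K + 1))) at_top"
      unfolding eventually_at_top_linorder
    proof (intro exI[of _ 1] allI impI)
      fix n :: nat assume n: "n \<ge> 1"
      have "real (card (approx_classes L n)) \<le> real ((n + 1) * (?s * (n + 1) + 1) ^ ?K)"
        using b of_nat_le_iff by blast
      also have "\<dots> = (real n + 1) * (real ?s * (real n + 1) + 1) ^ ?K"
        by (simp only: of_nat_mult of_nat_power of_nat_add of_nat_1)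
      also have "\<dots> \<le> (2 * real n) * (2 * (real ?s + 1) * real n) ^ ?K"
      proof (intro mult_mono power_mono)
        show "real ?s * (real n + 1) + 1 \<le> 2 * (real ?s + 1) * real n"
        proof -
          have h1: "real ?s \<le> real ?s * real n" using n by (simp add: mult_le_cancel_left1)
          have h2: "1 \<le> real n" using n by simp
          have e1: "real ?s * (real n + 1) + 1 = real ?s * real n + real ?s + 1" by (simp add: algebra_simps)
          have e2: "2 * (real ?s + 1) * real n = 2 * (real ?s * real n) + 2 * real n" by (simp add: algebra_simps)
          show ?thesis unfolding e1 e2 using h1 h2 by linarith
        qed
      qed (use n in auto)
      also have "\<dots> \<le> (2 * (real ?s + 1)) ^ (?K + 1) * real n ^ (?K + 1)"
      proof -
        have e: "(2 * (real ?s + 1) * real n) ^ ?K = (2 * (real ?s + 1)) ^ ?K * real n ^ ?K"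
          by (rule power_mult_distrib)
        have e2: "real n ^ (?K + 1) = real n ^ ?K * real n" by simp
        have "(2 * real n) * (2 * (real ?s + 1) * real n) ^ ?K = 2 * (2 * (real ?s + 1)) ^ ?K * real n ^ (?K + 1)"
          unfolding e e2 by (simp only: ac_simps)
        also have "\<dots> \<le> (2 * (real ?s + 1)) * (2 * (real ?s + 1)) ^ ?K * real n ^ (?K + 1)"
          by (intro mult_right_mono) auto
        finally show ?thesis by (simp add: algebra_simps)
      qed
      finally show "norm (real (card (approx_classes L n))) \<le> (2 * (real ?s + 1)) ^ (?K + 1) * norm (real n ^ (?K + 1))"
        by simp
    qed
  qed
  then show ?thesis by blast
qed

end

lemma foldl_wstep_Sym: "foldl wstep w (map Sym x) = w @ x"
  by (induction x arbitrary: w) auto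

lemma foldl_wstep_Pop: "foldl wstep w (replicate i Pop) = drop i w"
  by (induction i arbitrary: w) (auto simp: drop_Suc tl_drop)

lemma wnd_test: "wnd (map Sym x @ replicate i Pop @ map Sym z) = drop i x @ z"
  unfolding wnd_def by (simp add: foldl_wstep_Sym foldl_wstep_Pop)

lemma wnd_Sym: "wnd (map Sym x) = x"
  unfolding wnd_def by (simp add: foldl_wstep_Sym)

lemma run_cong: "run A u = run A u' \<Longrightarrow> run A (u @ v) = run A (u' @ v)"
  by (cases A) (auto simp: run_def)

lemma swa_distinguish:
  assumes A: "swa_for A L" and len: "length x = length y"
    and r: "run A (map Sym x) = run A (map Sym y)"
  shows "suffix_exp (MN L) x y"
  unfolding suffix_exp_def
proof (intro conjI allI impI)
  fix i assume i: "i < length x"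
  show "MN L (drop i x) (drop i y)" unfolding MN_def
  proof
    fix z :: "'a list"
    let ?v = "replicate i Pop @ map Sym z"
    have "run A (map Sym x @ ?v) = run A (map Sym y @ ?v)" by (rule run_cong[OF r])
    then have "(wnd (map Sym x @ ?v) \<in> L) = (wnd (map Sym y @ ?v) \<in> L)"
      using A unfolding swa_for_def by metis
    then show "(drop i x @ z \<in> L) = (drop i y @ z \<in> L)" by (simp add: wnd_test)
  qed
qed (rule len)

lemma space_ge:
  assumes "length x \<le> n"
  shows "enat (length (run A (map Sym x))) \<le> space A n"
  unfolding space_def
proof (rule SUP_upper)
  show "map Sym x \<in> {u. \<forall>i\<le>length u. length (wnd (take i u)) \<le> n}"
    using assms by (auto simp: take_map wnd_Sym)
qed

lemma sum_pow2_le: "(\<Sum>i\<le>v. (2::nat) ^ i) \<le> 2 ^ (v + 1)"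
  by (induction v) auto

lemma card_bool_lists: "card {bs::bool list. length bs \<le> v} \<le> 2 ^ (v + 1)"
  using card_lists_length_le[of "UNIV::bool set" v] sum_pow2_le[of v] by simp

lemma classes_len_bound:
  fixes L :: "('a::finite) list set"
  assumes A: "swa_for A L" and sp: "space A n = enat v" and m: "m \<le> n"
  shows "card (classes_len L m) \<le> 2 ^ (v + 1)"
proof -
  define g where "g bs = SRel L `` {SOME x. length x = m \<and> run A (map Sym x) = bs}" for bs
  have "classes_len L m \<subseteq> g ` {bs. length bs \<le> v}"
  proof
    fix c assume "c \<in> classes_len L m"
    then obtain x where x: "length x = m" "c = SRel L `` {x}" unfolding classes_len_def by auto
    let ?bs = "run A (map Sym x)"
    have "enat (length ?bs) \<le> enat v" using space_ge[of x n A] x m sp by simp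
    then have lb: "length ?bs \<le> v" by simp
    define y where "y = (SOME y. length y = m \<and> run A (map Sym y) = ?bs)"
    have y: "length y = m \<and> run A (map Sym y) = ?bs" unfolding y_def by (rule someI[of _ x]) (use x in simp)
    then have "suffix_exp (MN L) y x" using swa_distinguish[OF A] x by simp
    then have "c = g ?bs" unfolding g_def y_def[symmetric] x(2) using SRel_Image_eq by metis
    then show "c \<in> g ` {bs. length bs \<le> v}" using lb by blast
  qed
  moreover have "finite {bs::bool list. length bs \<le> v}"
    using finite_lists_length_le[of "UNIV::bool set" v] by simp
  ultimately have "card (classes_len L m) \<le> card {bs::bool list. length bs \<le> v}"
    by (meson card_image_le card_mono finite_imageI le_trans)
  also have "\<dots> \<le> 2 ^ (v + 1)" by (rule card_bool_lists)
  finally show ?thesis .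
qed

lemma V_attained:
  assumes "V L n \<noteq> \<infinity>"
  shows "\<exists>A. swa_for A L \<and> space A n = V L n"
proof -
  let ?S = "(\<lambda>A. space A n) ` {A. swa_for A L}"
  have "V L n = Inf ?S" unfolding V_def by simp
  have ne: "?S \<noteq> {}"
  proof
    assume "?S = {}"
    then have "V L n = Inf {}" using \<open>V L n = Inf ?S\<close> by simp
    then show False using assms by (simp add: top_enat_def)
  qed
  then obtain x where "x \<in> ?S" by blast
  then have "(LEAST x. x \<in> ?S) \<in> ?S" by (rule LeastI)
  moreover have "Inf ?S = (LEAST x. x \<in> ?S)" unfolding Inf_enat_def using ne by (rule if_not_P)
  ultimately have "Inf ?S \<in> ?S" by simp
  then obtain A where "swa_for A L" "space A n = Inf ?S" by (metis (no_types, lifting) imageE mem_Collect_eq)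
  then show ?thesis unfolding V_def by blast
qed

lemma V_log_poly:
  fixes L :: "('a::finite) list set"
  assumes fin: "\<forall>n. V L n \<noteq> \<infinity>"
    and big: "(\<lambda>n. real (the_enat (V L n))) \<in> O(\<lambda>n. ln (real n))"
  shows "\<exists>k::nat. (\<lambda>n. real (card (approx_classes L n))) \<in> O(\<lambda>n. real n ^ k)"
proof -
  define v where "v n = the_enat (V L n)" for n
  have vV: "V L n = enat (v n)" for n
  proof -
    obtain i where "V L n = enat i" using fin by (cases "V L n") (auto simp del: not_infinity_eq)
    then show ?thesis unfolding v_def by simp
  qed
  have cb: "card (approx_classes L n) \<le> (n + 1) * 2 ^ (v n + 1)" for n
  proof -
    obtain A where A: "swa_for A L" "space A n = enat (v n)" using V_attained[of L n] fin vV by metis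
    have "card (approx_classes L n) \<le> (\<Sum>m\<le>n. card (classes_len L m))" by (rule card_approx_le_sum)
    also have "\<dots> \<le> (\<Sum>m\<le>n. 2 ^ (v n + 1))"
      by (intro sum_mono classes_len_bound[OF A]) simp
    finally show ?thesis by simp
  qed
  from big obtain c where c: "c > 0" "eventually (\<lambda>n. norm (real (v n)) \<le> c * norm (ln (real n))) at_top"
    unfolding v_def by (elim landau_o.bigE)
  then obtain N where N: "\<And>n. n \<ge> N \<Longrightarrow> real (v n) \<le> c * \<bar>ln (real n)\<bar>"
    by (auto simp: eventually_at_top_linorder)
  define k where "k = nat \<lceil>c * ln 2\<rceil>"
  have "(\<lambda>n. real (card (approx_classes L n))) \<in> O(\<lambda>n. real n ^ (k + 1))"
  proof (rule bigoI[where c = 4])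
    show "eventually (\<lambda>n. norm (real (card (approx_classes L n))) \<le> 4 * norm (real n ^ (k + 1))) at_top"
      unfolding eventually_at_top_linorder
    proof (intro exI[of _ "max N 1"] allI impI)
      fix n :: nat assume n: "n \<ge> max N 1"
      then have n1: "real n \<ge> 1" by simp
      have vn: "real (v n) \<le> c * ln (real n)" using N[of n] n abs_of_nonneg[OF ln_ge_zero[OF n1]] by simp
      have "(2::real) ^ v n = 2 powr real (v n)" by (simp add: powr_realpow)
      also have "\<dots> \<le> 2 powr (c * ln (real n))" using vn by (intro powr_mono) auto
      also have "\<dots> = real n powr (c * ln 2)"
        using n1 by (simp add: powr_def)
      also have "\<dots> \<le> real n powr real k"
        using n1 unfolding k_def by (intro powr_mono) (auto, linarith)
      also have "\<dots> = real n ^ k" using n1 by (simp add: powr_realpow)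
      finally have p: "(2::real) ^ v n \<le> real n ^ k" .
      have "real (card (approx_classes L n)) \<le> real ((n + 1) * 2 ^ (v n + 1))"
        using cb of_nat_le_iff by blast
      also have "\<dots> = (real n + 1) * 2 * 2 ^ v n" by (simp add: algebra_simps)
      also have "\<dots> \<le> (2 * real n) * 2 * real n ^ k"
        using p n1 by (intro mult_mono) auto
      also have "\<dots> = 4 * real n ^ (k + 1)" by simp
      finally show "norm (real (card (approx_classes L n))) \<le> 4 * norm (real n ^ (k + 1))" by simp
    qed
  qed
  then show ?thesis by blast
qed

fun enc :: "nat \<Rightarrow> bool list" where
  "enc n = (if n = 0 then [] else odd n # enc (n div 2))"

declare enc.simps[simp del]

lemma enc_0[simp]: "enc 0 = []" by (simp add: enc.simps)

lemma enc_inj: "enc m = enc n \<Longrightarrow> m = n"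
proof (induction m arbitrary: n rule: enc.induct)
  case (1 m)
  show ?case
  proof (cases "m = 0")
    case True
    then show ?thesis using 1 by (cases "n = 0") (auto simp: enc.simps[of n])
  next
    case False
    have em: "enc m = odd m # enc (m div 2)" using False by (simp add: enc.simps)
    have nz: "n \<noteq> 0"
    proof
      assume "n = 0"
      then show False using "1.prems" em by simp
    qed
    have en: "enc n = odd n # enc (n div 2)" using nz by (simp add: enc.simps)
    have "odd m = odd n" "enc (m div 2) = enc (n div 2)" using "1.prems" em en by auto
    then have "m div 2 = n div 2" using "1.IH" False by blast
    then show ?thesis using \<open>odd m = odd n\<close> by (metis div_mult_mod_eq odd_iff_mod_2_eq_one parity_cases)
  qed
qed

lemma enc_len: "n \<ge> 1 \<Longrightarrow> 2 ^ length (enc n) \<le> 2 * n"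
proof (induction n rule: enc.induct)
  case (1 n)
  then have e: "enc n = odd n # enc (n div 2)" by (simp add: enc.simps)
  show ?case
  proof (cases "n div 2 = 0")
    case True then show ?thesis using e 1 by simp
  next
    case False
    then have "2 ^ length (enc (n div 2)) \<le> 2 * (n div 2)" using 1 by simp
    then show ?thesis using e by simp
  qed
qed

locale alg =
  fixes L :: "('a::finite) list set"
begin

definition hC :: "nat \<Rightarrow> 'a list set \<Rightarrow> nat" where
  "hC m = (SOME h. bij_betw h (classes_len L m) {0..<card (classes_len L m)})"

lemma hC_bij: "bij_betw (hC m) (classes_len L m) {0..<card (classes_len L m)}"
  unfolding hC_def by (rule someI_ex[OF ex_bij_betw_finite_nat[OF finite_classes_len]])

definition idx :: "'a list \<Rightarrow> nat" where
  "idx w = hC (length w) (SRel L `` {w})"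

definition code :: "'a list \<Rightarrow> bool list" where
  "code w = enc (prod_encode (length w, idx w))"

lemma cls_in: "SRel L `` {w} \<in> classes_len L (length w)"
  unfolding classes_len_def by auto

lemma idx_lt: "idx w < card (classes_len L (length w))"
  using hC_bij[of "length w"] cls_in[of w] unfolding idx_def bij_betw_def by auto

lemma code_eq_iff: "code w = code w' \<longleftrightarrow> suffix_exp (MN L) w w'"
proof
  assume "code w = code w'"
  then have "prod_encode (length w, idx w) = prod_encode (length w', idx w')"
    unfolding code_def by (rule enc_inj)
  then have l: "length w = length w'" and i: "idx w = idx w'" by auto
  have "SRel L `` {w} = SRel L `` {w'}"
    using hC_bij[of "length w"] cls_in[of w] cls_in[of w'] i l
    unfolding idx_def bij_betw_def inj_on_def by auto
  then show "suffix_exp (MN L) w w'" by (rule SRel_Image_eqD)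
next
  assume s: "suffix_exp (MN L) w w'"
  then have "length w = length w'" unfolding suffix_exp_def by simp
  moreover have "SRel L `` {w} = SRel L `` {w'}" by (rule SRel_Image_eq[OF s])
  ultimately show "code w = code w'" unfolding code_def idx_def by simp
qed

definition dec :: "bool list \<Rightarrow> 'a list" where
  "dec s = (SOME w. code w = s)"

lemma dec_code: "suffix_exp (MN L) (dec (code w)) w"
proof -
  have "code (dec (code w)) = code w" unfolding dec_def by (rule someI[of _ w]) simp
  then show ?thesis using code_eq_iff by blast
qed

lemma wstep_resp: "suffix_exp (MN L) w w' \<Longrightarrow> suffix_exp (MN L) (wstep w x) (wstep w' x)"
proof (cases x)
  case (Sym a)
  assume s: "suffix_exp (MN L) w w'"
  show ?thesis unfolding Sym suffix_exp_def
  proof (intro conjI allI impI)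
    show "length (wstep w (Sym a)) = length (wstep w' (Sym a))" using s by (simp add: suffix_exp_def)
    fix i assume i: "i < length (wstep w (Sym a))"
    show "MN L (drop i (wstep w (Sym a))) (drop i (wstep w' (Sym a)))"
    proof (cases "i < length w")
      case True
      then have "MN L (drop i w) (drop i w')" using s by (simp add: suffix_exp_def)
      then show ?thesis using True s by (simp add: suffix_exp_def MN_app)
    next
      case False
      then show ?thesis using i s by (simp add: suffix_exp_def)
    qed
  qed
next
  case Pop
  assume s: "suffix_exp (MN L) w w'"
  show ?thesis unfolding Pop suffix_exp_def
  proof (intro conjI allI impI)
    show "length (wstep w Pop) = length (wstep w' Pop)" using s by (simp add: suffix_exp_def)
    fix i assume i: "i < length (wstep w Pop)"
    then have "Suc i < length w" by simp
    then have "MN L (drop (Suc i) w) (drop (Suc i) w')" using s by (simp add: suffix_exp_def)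
    then show "MN L (drop i (wstep w Pop)) (drop i (wstep w' Pop))" by (simp add: drop_Suc tl_drop)
  qed
qed

definition dlt :: "bool list \<Rightarrow> 'a sym \<Rightarrow> bool list" where
  "dlt s x = code (wstep (dec s) x)"

definition Alg :: "'a swa" where
  "Alg = (code [], dlt, \<lambda>s. dec s \<in> L)"

lemma wnd_snoc: "wnd (u @ [x]) = wstep (wnd u) x" unfolding wnd_def by simp

lemma run_Alg: "run Alg u = code (wnd u)"
proof (induction u rule: rev_induct)
  case Nil then show ?case by (simp add: run_def Alg_def wnd_def)
next
  case (snoc x u)
  have "run Alg (u @ [x]) = dlt (run Alg u) x" by (simp add: run_def Alg_def)
  also have "\<dots> = code (wstep (dec (code (wnd u))) x)" unfolding snoc dlt_def ..
  also have "\<dots> = code (wstep (wnd u) x)"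
    using code_eq_iff wstep_resp[OF dec_code] by blast
  finally show ?case by (simp add: wnd_snoc)
qed

lemma suffix_exp_L: "suffix_exp (MN L) y w \<Longrightarrow> y \<in> L \<longleftrightarrow> w \<in> L"
proof -
  assume s: "suffix_exp (MN L) y w"
  show ?thesis
  proof (cases "length w = 0")
    case True then show ?thesis using s by (simp add: suffix_exp_def)
  next
    case False
    have "0 < length y" "\<forall>i<length y. MN L (drop i y) (drop i w)"
      using s False unfolding suffix_exp_def by auto
    then have "MN L (drop 0 y) (drop 0 w)" by blast
    then show ?thesis unfolding MN_def by (metis append_Nil2 drop0)
  qed
qed

lemma Alg_correct: "swa_for Alg L"
  unfolding swa_for_def
proof
  fix u
  have "swa_out Alg (run Alg u) = (dec (code (wnd u)) \<in> L)" unfolding run_Alg by (simp add: swa_out_def Alg_def)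
  also have "\<dots> = (wnd u \<in> L)" by (rule suffix_exp_L[OF dec_code])
  finally show "swa_out Alg (run Alg u) = (wnd u \<in> L)" .
qed

lemma code_bound:
  assumes "length w \<le> n"
  shows "2 ^ length (code w) \<le> 4 * (n + card (approx_classes L n) + 1) ^ 2"
proof -
  let ?c = "card (approx_classes L n)"
  define N where "N = prod_encode (length w, idx w)"
  have il: "idx w < ?c"
    using idx_lt[of w] card_mono[OF finite_approx[of L] classes_len_sub[OF assms, of L]] by simp
  have "N = triangle (length w + idx w) + length w" unfolding N_def prod_encode_def by simp
  also have "triangle (length w + idx w) \<le> (length w + idx w + 1) ^ 2"
    unfolding triangle_def power2_eq_square by simp
  finally have "N \<le> (length w + idx w + 1) ^ 2 + length w" by simp
  also have "\<dots> \<le> (n + ?c + 1) ^ 2 + (n + ?c + 1) ^ 2"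
    using assms il by (intro add_mono power_mono) (auto simp: power2_eq_square)
  finally have Nb: "N \<le> 2 * (n + ?c + 1) ^ 2" by simp
  show ?thesis
  proof (cases "N = 0")
    case True then show ?thesis unfolding code_def N_def[symmetric] by simp
  next
    case False
    then have "2 ^ length (code w) \<le> 2 * N" unfolding code_def N_def[symmetric] by (intro enc_len) simp
    then show ?thesis using Nb by simp
  qed
qed

lemma V_bound: "\<exists>b. V L n \<le> enat b \<and> 2 ^ b \<le> 4 * (n + card (approx_classes L n) + 1) ^ 2"
proof -
  let ?X = "4 * (n + card (approx_classes L n) + 1) ^ 2"
  define b where "b = Max ((\<lambda>w. length (code w)) ` {w. length w \<le> n})"
  have fin: "finite ((\<lambda>w. length (code w)) ` {w. length w \<le> n})" using finite_len_le_words by blast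
  have b_ge: "length (code w) \<le> b" if "length w \<le> n" for w
    unfolding b_def using fin that by (intro Max_ge) auto
  have ne: "(\<lambda>w. length (code w)) ` {w. length w \<le> n} \<noteq> {}"
    by (metis (mono_tags) empty_iff image_is_empty le0 list.size(3) mem_Collect_eq)
  have "b \<in> (\<lambda>w. length (code w)) ` {w. length w \<le> n}"
    unfolding b_def by (rule Max_in[OF fin ne])
  then obtain w where w: "length w \<le> n" "b = length (code w)" by auto
  have "space Alg n \<le> enat b" unfolding space_def
  proof (rule SUP_least)
    fix u :: "'a sym list" assume "u \<in> {u. \<forall>i\<le>length u. length (wnd (take i u)) \<le> n}"
    then have "length (wnd (take (length u) u)) \<le> n" by blast
    then have "length (wnd u) \<le> n" by simp
    then show "enat (length (run Alg u)) \<le> enat b" using b_ge by (simp add: run_Alg)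
  qed
  moreover have "V L n \<le> space Alg n" unfolding V_def by (rule INF_lower) (simp add: Alg_correct)
  ultimately have "V L n \<le> enat b" by simp
  moreover have "2 ^ b \<le> ?X" using code_bound[OF w(1)] w(2) by simp
  ultimately show ?thesis by blast
qed

end

lemma poly_V_log:
  fixes L :: "('a::finite) list set"
  assumes "\<exists>k::nat. (\<lambda>n. real (card (approx_classes L n))) \<in> O(\<lambda>n. real n ^ k)"
  shows "(\<forall>n. V L n \<noteq> \<infinity>) \<and> (\<lambda>n. real (the_enat (V L n))) \<in> O(\<lambda>n. ln (real n))"
proof -
  interpret alg L .
  obtain k where k: "(\<lambda>n. real (card (approx_classes L n))) \<in> O(\<lambda>n. real n ^ k)" using assms by blast
  from k obtain C where C: "C > 0" "eventually (\<lambda>n. norm (real (card (approx_classes L n))) \<le> C * norm (real n ^ k)) at_top"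
    by (elim landau_o.bigE)
  then obtain N where N: "\<And>n. n \<ge> N \<Longrightarrow> real (card (approx_classes L n)) \<le> C * real n ^ k"
    by (auto simp: eventually_at_top_linorder)
  have fin: "\<forall>n. V L n \<noteq> \<infinity>" using V_bound by (metis enat_ord_simps(5) infinity_ileE)
  define D where "D = C + 2"
  define K where "K = 2 + 2 * log 2 D + 2 * real (k + 1) / ln 2"
  have "(\<lambda>n. real (the_enat (V L n))) \<in> O(\<lambda>n. ln (real n))"
  proof (rule bigoI[where c = K])
    show "eventually (\<lambda>n. norm (real (the_enat (V L n))) \<le> K * norm (ln (real n))) at_top"
      unfolding eventually_at_top_linorder
    proof (intro exI[of _ "max N 3"] allI impI)
      fix n :: nat assume n: "n \<ge> max N 3"
      then have n1: "real n \<ge> 1" and n3: "real n \<ge> 3" by auto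
      have lnn: "ln (real n) \<ge> 1"
      proof -
        have "exp 1 \<le> (3::real)" using exp_le by simp
        also have "\<dots> \<le> real n" using n3 .
        finally have e: "exp 1 \<le> real n" .
        have "ln (exp 1) \<le> ln (real n)" using e n1 by (subst ln_le_cancel_iff) auto
        then show ?thesis by simp
      qed
      obtain b where b: "V L n \<le> enat b" "2 ^ b \<le> 4 * (n + card (approx_classes L n) + 1) ^ 2"
        using V_bound by blast
      have tv: "the_enat (V L n) \<le> b" using b(1) by (cases "V L n") auto
      let ?c = "real (card (approx_classes L n))"
      have cb: "?c \<le> C * real n ^ k" using N n by simp
      have base: "real n + ?c + 1 \<le> D * real n ^ (k + 1)"
      proof -
        have "real n \<le> real n ^ (k + 1)" using n1 by (metis One_nat_def le_add2 power_increasing power_one_right)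
        moreover have "1 \<le> real n ^ (k + 1)" by (rule one_le_power[OF n1])
        moreover have "C * real n ^ k \<le> C * real n ^ (k + 1)"
          using n1 C(1) by (intro mult_left_mono power_increasing) auto
        ultimately show ?thesis using cb unfolding D_def by (simp add: algebra_simps)
      qed
      have "(2::real) ^ b \<le> 4 * (real n + ?c + 1) ^ 2"
        using b(2) by (metis (mono_tags, lifting) of_nat_1 of_nat_add of_nat_le_iff of_nat_mult of_nat_numeral of_nat_power)
      also have "\<dots> \<le> 4 * (D * real n ^ (k + 1)) ^ 2"
        using base by (intro mult_left_mono power_mono) auto
      finally have pb: "(2::real) ^ b \<le> 4 * (D * real n ^ (k + 1)) ^ 2" .
      have Dpos: "D > 0" unfolding D_def using C by simp
      have "real b = log 2 (2 ^ b)" by (simp add: log_nat_power)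
      also have "\<dots> \<le> log 2 (4 * (D * real n ^ (k + 1)) ^ 2)"
        using pb Dpos n1 by (subst log_le_cancel_iff) auto
      also have "\<dots> = 2 + 2 * log 2 D + 2 * real (k + 1) * log 2 (real n)"
      proof -
        have l4: "log 2 (4::real) = 2"
        proof -
          have "log 2 (4::real) = log 2 (2 ^ 2)" by simp
          also have "\<dots> = 2" by (subst log_nat_power) auto
          finally show ?thesis .
        qed
        show ?thesis using Dpos n1 by (simp add: log_mult log_nat_power l4 algebra_simps)
      qed
      also have "log 2 (real n) = ln (real n) / ln 2" by (simp add: log_def)
      finally have "real b \<le> 2 + 2 * log 2 D + 2 * real (k + 1) / ln 2 * ln (real n)" by simp
      also have "\<dots> \<le> K * ln (real n)"
      proof -
        have "log 2 D \<ge> 0 \<or> log 2 D < 0" by auto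
        have "2 + 2 * log 2 D \<le> \<bar>2 + 2 * log 2 D\<bar>" by simp
        have "D \<ge> 2" unfolding D_def using C by simp
        then have "log 2 D \<ge> 1" by simp
        then have "2 + 2 * log 2 D \<le> (2 + 2 * log 2 D) * ln (real n)"
          using lnn by (simp add: mult_le_cancel_left1)
        then show ?thesis unfolding K_def by (simp add: algebra_simps)
      qed
      finally have "real b \<le> K * ln (real n)" .
      then show "norm (real (the_enat (V L n))) \<le> K * norm (ln (real n))"
        using tv lnn by simp
    qed
  qed
  with fin show ?thesis by blast
qed

theorem theorem16:
  fixes L :: "('a::finite) list set"
  assumes "regular L"
  shows "(((\<forall>n. V L n \<noteq> \<infinity>) \<and> (\<lambda>n. real (the_enat (V L n))) \<in> O(\<lambda>n. ln (real n)))
           \<longleftrightarrow> (\<exists>k::nat. (\<lambda>n. real (card (approx_classes L n))) \<in> O(\<lambda>n. real n ^ k)))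
       \<and> ((\<exists>k::nat. (\<lambda>n. real (card (approx_classes L n))) \<in> O(\<lambda>n. real n ^ k))
           \<longleftrightarrow> \<not> (\<exists>u2 v2 u v. critical_tuple (MN L) u2 v2 u v))"
proof -
  have "\<exists>(Q::nat set) (q0::nat) (\<delta>::nat \<Rightarrow> 'a \<Rightarrow> nat) (F::nat set).
      finite Q \<and> q0 \<in> Q \<and> (\<forall>q\<in>Q. \<forall>a. \<delta> q a \<in> Q) \<and>
      (\<forall>w. w \<in> L \<longleftrightarrow> foldl \<delta> q0 w \<in> F)"
    using assms unfolding regular_def .
  then show ?thesis
  proof (elim exE)
  fix Q q0 \<delta> F assume A: "finite Q \<and> q0 \<in> Q \<and> (\<forall>q\<in>Q. \<forall>a. \<delta> q a \<in> (Q::nat set)) \<and>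
      (\<forall>w. w \<in> L \<longleftrightarrow> foldl \<delta> (q0::nat) w \<in> F)"
  interpret dfa L Q q0 \<delta> F
  proof
    show "finite Q" "q0 \<in> Q" using A by simp_all
    show "\<And>q a. q \<in> Q \<Longrightarrow> \<delta> q a \<in> Q" using A by simp
    show "\<And>w. w \<in> L \<longleftrightarrow> foldl \<delta> q0 w \<in> F" using A by simp
  qed
  show ?thesis
  proof (rule conjI; rule iffI)
    assume "(\<forall>n. V L n \<noteq> \<infinity>) \<and> (\<lambda>n. real (the_enat (V L n))) \<in> O(\<lambda>n. ln (real n))"
    then show "\<exists>k::nat. (\<lambda>n. real (card (approx_classes L n))) \<in> O(\<lambda>n. real n ^ k)"
      using V_log_poly by blast
  next
    assume "\<exists>k::nat. (\<lambda>n. real (card (approx_classes L n))) \<in> O(\<lambda>n. real n ^ k)"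
    then show "(\<forall>n. V L n \<noteq> \<infinity>) \<and> (\<lambda>n. real (the_enat (V L n))) \<in> O(\<lambda>n. ln (real n))"
      by (rule poly_V_log)
  next
    assume "\<exists>k::nat. (\<lambda>n. real (card (approx_classes L n))) \<in> O(\<lambda>n. real n ^ k)"
    then show "\<not> (\<exists>u2 v2 u v. critical_tuple (MN L) u2 v2 u v)"
      using crit_not_poly by blast
  next
    assume "\<not> (\<exists>u2 v2 u v. critical_tuple (MN L) u2 v2 u v)"
    then show "\<exists>k::nat. (\<lambda>n. real (card (approx_classes L n))) \<in> O(\<lambda>n. real n ^ k)"
      by (rule nocrit_poly)
  qed
qed
qed

end
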